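(* Let $K$ be a positive definite field and $E$ the graph with one vertex and two loops $a,b$. Then $L_K(E)$ is graded $*$-regular but is neither graded unit-regular nor graded directly finite.
   Context: $L_K(E)$ is the unital $K$-algebra generated by $a,b,a^*,b^*$ with identity $v$ (the vertex) subject to $a^*a=b^*b=1$, $a^*b=b^*a=0$, $aa^*+bb^*=1$; it is $\mathbb Z$-graded with $\deg a=\deg b=1$, $\deg a^*=\deg b^*=-1$, and has the involution $(\sum k_ipq^* )^*=\sum k_i^*qp^*$ induced from the involution of $K$. $K$ positive definite: $\sum k_ik_i^*=0\Rightarrow$ all $k_i=0$. A unital graded $*$-ring is graded $*$-regular if for every homogeneous $x$ there is a homogeneous projection $p$ ($p=p^2=p^*$) with $xA=pA$. Graded unit-regular: for every homogeneous $x$ there is an invertible homogeneous $y$ with $xyx=x$. Graded directly finite: for homogeneous $x,y$, $xy=1$ implies $yx=1$. *)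

theory Defs
  imports "HOL-Library.Poly_Mapping"
begin

datatype lett = La | Lb | Las | Lbs

datatype word = Word "lett list"

instantiation word :: monoid_add
begin
fun plus_word :: "word \<Rightarrow> word \<Rightarrow> word" where
  "plus_word (Word u) (Word v) = Word (u @ v)"
definition zero_word :: word where "zero_word = Word []"
instance
proof
  fix a b c :: word
  show "a + b + c = a + (b + c)" by (cases a; cases b; cases c) simp
  show "0 + a = a" by (cases a) (simp add: zero_word_def)
  show "a + 0 = a" by (cases a) (simp add: zero_word_def)
qed
end

text \<open>Free unital K-algebra K<a,b,a*,b*>: finitely supported K-valued functions on words,
  with the convolution product (word concatenation). Scalars are Poly_Mapping.single 0 c.\<close>
type_synonym 'k freealg = "word \<Rightarrow>\<^sub>0 'k"

definition gen :: "lett \<Rightarrow> 'k::ring_1 freealg" where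
  "gen l = Poly_Mapping.single (Word [l]) 1"

fun ldeg :: "lett \<Rightarrow> int" where
  "ldeg La = 1" | "ldeg Lb = 1" | "ldeg Las = -1" | "ldeg Lbs = -1"

fun wdeg :: "word \<Rightarrow> int" where
  "wdeg (Word u) = sum_list (map ldeg u)"

fun lstar :: "lett \<Rightarrow> lett" where
  "lstar La = Las" | "lstar Lb = Lbs" | "lstar Las = La" | "lstar Lbs = Lb"

fun wstar :: "word \<Rightarrow> word" where
  "wstar (Word u) = Word (rev (map lstar u))"

definition fa_star :: "('k::ring_1 \<Rightarrow> 'k) \<Rightarrow> 'k freealg \<Rightarrow> 'k freealg" where
  "fa_star \<sigma> x = Poly_Mapping.map \<sigma> (Poly_Mapping.map_key wstar x)"

definition two_sided_ideal :: "'k::ring_1 freealg set \<Rightarrow> bool" where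
  "two_sided_ideal J \<longleftrightarrow> 0 \<in> J \<and> (\<forall>x\<in>J. \<forall>y\<in>J. x + y \<in> J)
     \<and> (\<forall>x\<in>J. \<forall>r. r * x \<in> J \<and> x * r \<in> J)"

definition leavitt_relations :: "'k::ring_1 freealg set" where
  "leavitt_relations =
     { gen Las * gen La - 1, gen Lbs * gen Lb - 1,
       gen Las * gen Lb, gen Lbs * gen La,
       gen La * gen Las + gen Lb * gen Lbs - 1 }"

text \<open>The ideal generated by the relations; L_K(E) = freealg / lv_ideal
  (the identity 1 of the free algebra is the vertex v).\<close>
definition lv_ideal :: "'k::ring_1 freealg set" where
  "lv_ideal = \<Inter> {J. two_sided_ideal J \<and> leavitt_relations \<subseteq> J}"

definition lv_eq :: "'k::ring_1 freealg \<Rightarrow> 'k freealg \<Rightarrow> bool" where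
  "lv_eq x y \<longleftrightarrow> x - y \<in> lv_ideal"

text \<open>The class of x is homogeneous in the induced Z-grading of L_K(E)
  (L_K(E)_d = image of the degree-d part of the free algebra).\<close>
definition lv_homog :: "'k::ring_1 freealg \<Rightarrow> bool" where
  "lv_homog x \<longleftrightarrow> (\<exists>y d. lv_eq x y \<and> (\<forall>w\<in>Poly_Mapping.keys y. wdeg w = d))"

definition lv_unit :: "'k::ring_1 freealg \<Rightarrow> bool" where
  "lv_unit y \<longleftrightarrow> (\<exists>z. lv_eq (y * z) 1 \<and> lv_eq (z * y) 1)"

text \<open>Graded *-regular: for every homogeneous x there is a homogeneous projection p
  (p = p^2 = p^*) with xA = pA, i.e. x \<in> pA and p \<in> xA.\<close>
definition lv_graded_star_regular :: "('k::ring_1 \<Rightarrow> 'k) \<Rightarrow> bool" where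
  "lv_graded_star_regular \<sigma> \<longleftrightarrow>
    (\<forall>x::'k freealg. lv_homog x \<longrightarrow>
       (\<exists>p. lv_homog p \<and> lv_eq (p * p) p \<and> lv_eq (fa_star \<sigma> p) p
            \<and> (\<exists>y. lv_eq x (p * y)) \<and> (\<exists>z. lv_eq p (x * z))))"

definition lv_graded_unit_regular :: "'k::ring_1 itself \<Rightarrow> bool" where
  "lv_graded_unit_regular _ \<longleftrightarrow>
    (\<forall>x::'k freealg. lv_homog x \<longrightarrow>
       (\<exists>y. lv_homog y \<and> lv_unit y \<and> lv_eq (x * y * x) x))"

definition lv_graded_directly_finite :: "'k::ring_1 itself \<Rightarrow> bool" where
  "lv_graded_directly_finite _ \<longleftrightarrow>
    (\<forall>x y :: 'k freealg. lv_homog x \<and> lv_homog y \<and> lv_eq (x * y) 1 \<longrightarrow> lv_eq (y * x) 1)"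

definition field_involution :: "('k::field \<Rightarrow> 'k) \<Rightarrow> bool" where
  "field_involution \<sigma> \<longleftrightarrow> (\<forall>x y. \<sigma> (x + y) = \<sigma> x + \<sigma> y) \<and>
     (\<forall>x y. \<sigma> (x * y) = \<sigma> x * \<sigma> y) \<and> (\<forall>x. \<sigma> (\<sigma> x) = x)"

definition positive_definite :: "('k::field \<Rightarrow> 'k) \<Rightarrow> bool" where
  "positive_definite \<sigma> \<longleftrightarrow>
     (\<forall>(n::nat) (k::nat \<Rightarrow> 'k). (\<Sum>i<n. k i * \<sigma> (k i)) = 0 \<longrightarrow> (\<forall>i<n. k i = 0))"

end

theory Submission imports Defs begin

lemma pm_induct[case_names zero step]:
  assumes "P 0"
    and "\<And>a b f. a \<notin> Poly_Mapping.keys f \<Longrightarrow> b \<noteq> 0 \<Longrightarrow> P f \<Longrightarrow>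
          Poly_Mapping.keys (Poly_Mapping.single a b + f) = insert a (Poly_Mapping.keys f) \<Longrightarrow>
          P (Poly_Mapping.single a b + f)"
  shows "P f"
proof (induction f rule: Poly_Mapping.update_induct)
  case const then show ?case using assms(1) by simp
next
  case (update f a b)
  have eq: "Poly_Mapping.update a b f = Poly_Mapping.single a b + f"
    using update(1) by (intro poly_mapping_eqI) (auto simp: lookup_update lookup_add lookup_single in_keys_iff when_def)
  have k: "Poly_Mapping.keys (Poly_Mapping.single a b + f) = insert a (Poly_Mapping.keys f)"
    using update(1,2) by (auto simp: in_keys_iff lookup_add lookup_single when_def split: if_splits)
  show ?case unfolding eq using assms(2)[OF update(1,2,3) k] .
qed

lemma pm_induct_add[case_names zero single add]:
  assumes "P 0" "\<And>a b. P (Poly_Mapping.single a b)" "\<And>x y. P x \<Longrightarrow> P y \<Longrightarrow> P (x + y)"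
  shows "P f"
  by (induction f rule: pm_induct) (use assms in auto)

lemma two_sided_ideal_Inter:
  "two_sided_ideal (\<Inter> {J. two_sided_ideal J \<and> S \<subseteq> J})"
  unfolding two_sided_ideal_def by blast

lemma ideal_lv: "two_sided_ideal (lv_ideal :: 'k::ring_1 freealg set)"
  unfolding lv_ideal_def by (rule two_sided_ideal_Inter)

lemma rel_lv: "leavitt_relations \<subseteq> (lv_ideal :: 'k::ring_1 freealg set)"
  unfolding lv_ideal_def by blast

lemma lv_min: "two_sided_ideal J \<Longrightarrow> leavitt_relations \<subseteq> J \<Longrightarrow> lv_ideal \<subseteq> J"
  unfolding lv_ideal_def by blast

context begin
lemma lvI_0: "0 \<in> lv_ideal" using ideal_lv unfolding two_sided_ideal_def by blast
lemma lvI_add: "x \<in> lv_ideal \<Longrightarrow> y \<in> lv_ideal \<Longrightarrow> x + y \<in> lv_ideal"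
  using ideal_lv unfolding two_sided_ideal_def by blast
lemma lvI_lmult: "x \<in> lv_ideal \<Longrightarrow> r * x \<in> lv_ideal"
  using ideal_lv unfolding two_sided_ideal_def by blast
lemma lvI_rmult: "x \<in> lv_ideal \<Longrightarrow> x * r \<in> lv_ideal"
  using ideal_lv unfolding two_sided_ideal_def by blast
lemma lvI_uminus: "(x::'k::ring_1 freealg) \<in> lv_ideal \<Longrightarrow> - x \<in> lv_ideal"
  using lvI_lmult[of x "-1"] by simp
lemma lvI_diff: "(x::'k::ring_1 freealg) \<in> lv_ideal \<Longrightarrow> y \<in> lv_ideal \<Longrightarrow> x - y \<in> lv_ideal"
  using lvI_add[OF _ lvI_uminus] by (metis diff_conv_add_uminus)
end

lemma lv_refl[simp]: "lv_eq x x" unfolding lv_eq_def by (simp add: lvI_0)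
lemma lv_sym: "lv_eq (x::'k::ring_1 freealg) y \<Longrightarrow> lv_eq y x"
  unfolding lv_eq_def using lvI_uminus by fastforce
lemma lv_trans[trans]: "lv_eq (x::'k::ring_1 freealg) y \<Longrightarrow> lv_eq y z \<Longrightarrow> lv_eq x z"
  unfolding lv_eq_def using lvI_add by fastforce
lemma lv_eq_trans_eq[trans]: "lv_eq x y \<Longrightarrow> y = z \<Longrightarrow> lv_eq x z" by simp
lemma eq_lv_eq_trans[trans]: "x = y \<Longrightarrow> lv_eq y z \<Longrightarrow> lv_eq x z" by simp
lemma lv_add: "lv_eq (x::'k::ring_1 freealg) x' \<Longrightarrow> lv_eq y y' \<Longrightarrow> lv_eq (x + y) (x' + y')"
proof -
  assume a: "lv_eq x x'" "lv_eq y y'"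
  have "x + y - (x' + y') = (x - x') + (y - y')" by (simp add: algebra_simps)
  then show ?thesis using a unfolding lv_eq_def by (metis lvI_add)
qed
lemma lv_uminus: "lv_eq (x::'k::ring_1 freealg) x' \<Longrightarrow> lv_eq (- x) (- x')"
  unfolding lv_eq_def using lvI_uminus by fastforce
lemma lv_diff: "lv_eq (x::'k::ring_1 freealg) x' \<Longrightarrow> lv_eq y y' \<Longrightarrow> lv_eq (x - y) (x' - y')"
  using lv_add[OF _ lv_uminus] by (metis diff_conv_add_uminus)
lemma lv_mult: "lv_eq (x::'k::ring_1 freealg) x' \<Longrightarrow> lv_eq y y' \<Longrightarrow> lv_eq (x * y) (x' * y')"
proof -
  assume a: "lv_eq x x'" "lv_eq y y'"
  have "x * y - x' * y' = (x - x') * y + x' * (y - y')" by (simp add: algebra_simps)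
  then show ?thesis using a unfolding lv_eq_def by (metis lvI_add lvI_lmult lvI_rmult)
qed
lemma lv_multL: "lv_eq (y::'k::ring_1 freealg) y' \<Longrightarrow> lv_eq (x * y) (x * y')"
  by (rule lv_mult) auto
lemma lv_multR: "lv_eq (x::'k::ring_1 freealg) x' \<Longrightarrow> lv_eq (x * y) (x' * y)"
  by (rule lv_mult) auto
lemma lv_sum_list: "(\<And>z. z \<in> set xs \<Longrightarrow> lv_eq (f z :: 'k::ring_1 freealg) (g z)) \<Longrightarrow>
   lv_eq (sum_list (map f xs)) (sum_list (map g xs))"
  by (induction xs) (auto intro: lv_add)
lemma lv_rel: "r \<in> leavitt_relations \<Longrightarrow> lv_eq r 0"
  unfolding lv_eq_def using rel_lv by auto

definition W :: "lett list \<Rightarrow> 'k::ring_1 freealg" where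
  "W u = Poly_Mapping.single (Word u) 1"
definition sc :: "'k::ring_1 \<Rightarrow> 'k freealg" where
  "sc c = Poly_Mapping.single 0 c"
definition pth :: "lett list \<Rightarrow> bool" where
  "pth \<pi> \<longleftrightarrow> set \<pi> \<subseteq> {La, Lb}"
definition stars :: "lett list \<Rightarrow> nat" where
  "stars w = length (filter (\<lambda>l. l = Las \<or> l = Lbs) w)"

lemma W_append: "(W (u @ v) :: 'k::ring_1 freealg) = W u * W v"
  unfolding W_def by (simp add: mult_single)
lemma W_Nil[simp]: "(W [] :: 'k::ring_1 freealg) = 1"
  unfolding W_def zero_word_def[symmetric] by simp
lemma gen_W: "gen l = W [l]" unfolding gen_def W_def ..
lemma single_sc_W: "(Poly_Mapping.single (Word u) c :: 'k::ring_1 freealg) = sc c * W u"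
  unfolding sc_def W_def by (simp add: mult_single zero_word_def)
lemma sc_mult: "sc (a * b) = (sc a * sc b :: 'k::ring_1 freealg)"
  unfolding sc_def by (simp add: mult_single)
lemma sc_1[simp]: "sc 1 = 1" unfolding sc_def by simp
lemma sc_0[simp]: "sc 0 = 0" unfolding sc_def by simp
lemma sc_add: "sc (a + b) = sc a + sc b" unfolding sc_def by (simp add: single_add)

lemma sc_comm: "sc c * x = x * (sc c :: 'k::comm_ring_1 freealg)"
proof (induction x rule: pm_induct_add)
  case (single a b) then show ?case unfolding sc_def by (simp add: mult_single mult.commute)
qed (auto simp: algebra_simps)

lemma pth_Cons[simp]: "pth (l # u) \<longleftrightarrow> l \<in> {La, Lb} \<and> pth u"
  unfolding pth_def by auto
lemma pth_append[simp]: "pth (u @ v) \<longleftrightarrow> pth u \<and> pth v"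
  unfolding pth_def by auto
lemma pth_Nil[simp]: "pth []" unfolding pth_def by auto

lemma rel1: "lv_eq (W [Las, La] :: 'k::ring_1 freealg) 1"
proof -
  have "gen Las * gen La - (1::'k freealg) \<in> leavitt_relations" unfolding leavitt_relations_def by simp
  then show ?thesis using rel_lv unfolding lv_eq_def by (auto simp: gen_W W_append[symmetric])
qed
lemma rel2: "lv_eq (W [Lbs, Lb] :: 'k::ring_1 freealg) 1"
proof -
  have "gen Lbs * gen Lb - (1::'k freealg) \<in> leavitt_relations" unfolding leavitt_relations_def by simp
  then show ?thesis using rel_lv unfolding lv_eq_def by (auto simp: gen_W W_append[symmetric])
qed
lemma rel3: "lv_eq (W [Las, Lb] :: 'k::ring_1 freealg) 0"
proof -
  have "gen Las * gen Lb \<in> (leavitt_relations :: 'k freealg set)" unfolding leavitt_relations_def by simp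
  then show ?thesis using rel_lv unfolding lv_eq_def by (auto simp: gen_W W_append[symmetric])
qed
lemma rel4: "lv_eq (W [Lbs, La] :: 'k::ring_1 freealg) 0"
proof -
  have "gen Lbs * gen La \<in> (leavitt_relations :: 'k freealg set)" unfolding leavitt_relations_def by simp
  then show ?thesis using rel_lv unfolding lv_eq_def by (auto simp: gen_W W_append[symmetric])
qed
lemma rel5: "lv_eq (W [La, Las] + W [Lb, Lbs] :: 'k::ring_1 freealg) 1"
proof -
  have "gen La * gen Las + gen Lb * gen Lbs - (1::'k freealg) \<in> leavitt_relations" unfolding leavitt_relations_def by simp
  then show ?thesis using rel_lv unfolding lv_eq_def by (auto simp: gen_W W_append[symmetric])
qed

lemma cancel2: "l \<in> {La, Lb} \<Longrightarrow> c \<in> {La, Lb} \<Longrightarrow>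
   lv_eq (W [lstar l, c] :: 'k::ring_1 freealg) (if l = c then 1 else 0)"
  using rel1 rel2 rel3 rel4 by auto

lemma cancel_mid: "l \<in> {La, Lb} \<Longrightarrow> c \<in> {La, Lb} \<Longrightarrow>
   lv_eq (W (u @ [lstar l, c] @ v) :: 'k::ring_1 freealg) (if l = c then W (u @ v) else 0)"
proof -
  assume a: "l \<in> {La, Lb}" "c \<in> {La, Lb}"
  have "(W (u @ [lstar l, c] @ v) :: 'k freealg) = W u * W [lstar l, c] * W v"
    by (simp add: W_append[symmetric])
  also have "lv_eq \<dots> (W u * (if l = c then 1 else 0) * W v)"
    by (intro lv_multR lv_multL cancel2 a)
  also have "\<dots> = (if l = c then W (u @ v) else 0)" by (simp add: W_append)
  finally show ?thesis .
qed

lemma wdeg_append: "wdeg (Word (u @ v)) = wdeg (Word u) + wdeg (Word v)" by simp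

lemma reduce:
  "pth \<pi> \<Longrightarrow> stars w \<le> length \<pi> \<Longrightarrow>
   lv_eq (W (w @ \<pi>) :: 'k::ring_1 freealg) 0 \<or>
   (\<exists>\<pi>'. pth \<pi>' \<and> int (length \<pi>') = int (length \<pi>) + wdeg (Word w) \<and> lv_eq (W (w @ \<pi>) :: 'k freealg) (W \<pi>'))"
proof (induction w arbitrary: \<pi> rule: rev_induct)
  case Nil then show ?case by auto
next
  case (snoc l w)
  show ?case
  proof (cases l)
    case La
    have "pth (La # \<pi>)" "stars w \<le> length (La # \<pi>)" using snoc.prems La by (auto simp: stars_def)
    from snoc.IH[OF this] show ?thesis using La by auto
  next
    case Lb
    have "pth (Lb # \<pi>)" "stars w \<le> length (Lb # \<pi>)" using snoc.prems Lb by (auto simp: stars_def)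
    from snoc.IH[OF this] show ?thesis using Lb by auto
  next
    case Las
    obtain c \<rho> where \<pi>: "\<pi> = c # \<rho>" using snoc.prems Las by (cases \<pi>) (auto simp: stars_def)
    have c: "c \<in> {La, Lb}" "pth \<rho>" using snoc.prems \<pi> by auto
    have st: "stars w \<le> length \<rho>" using snoc.prems \<pi> Las by (auto simp: stars_def)
    have e: "lv_eq (W ((w @ [l]) @ \<pi>) :: 'k freealg) (if La = c then W (w @ \<rho>) else 0)"
      using cancel_mid[of La c w \<rho>] c Las \<pi> by simp
    show ?thesis
    proof (cases "c = La")
      case False then show ?thesis using e by auto
    next
      case True
      from snoc.IH[OF c(2) st] show ?thesis
      proof
        assume "lv_eq (W (w @ \<rho>) :: 'k freealg) 0" then show ?thesis using e True lv_trans by auto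
      next
        assume "\<exists>\<pi>'. pth \<pi>' \<and> int (length \<pi>') = int (length \<rho>) + wdeg (Word w) \<and> lv_eq (W (w @ \<rho>) :: 'k freealg) (W \<pi>')"
        then obtain \<pi>' where "pth \<pi>'" "int (length \<pi>') = int (length \<rho>) + wdeg (Word w)" "lv_eq (W (w @ \<rho>) :: 'k freealg) (W \<pi>')" by blast
        then show ?thesis using e True Las \<pi> lv_trans by fastforce
      qed
    qed
  next
    case Lbs
    obtain c \<rho> where \<pi>: "\<pi> = c # \<rho>" using snoc.prems Lbs by (cases \<pi>) (auto simp: stars_def)
    have c: "c \<in> {La, Lb}" "pth \<rho>" using snoc.prems \<pi> by auto
    have st: "stars w \<le> length \<rho>" using snoc.prems \<pi> Lbs by (auto simp: stars_def)
    have e: "lv_eq (W ((w @ [l]) @ \<pi>) :: 'k freealg) (if Lb = c then W (w @ \<rho>) else 0)"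
      using cancel_mid[of Lb c w \<rho>] c Lbs \<pi> by simp
    show ?thesis
    proof (cases "c = Lb")
      case False then show ?thesis using e by auto
    next
      case True
      from snoc.IH[OF c(2) st] show ?thesis
      proof
        assume "lv_eq (W (w @ \<rho>) :: 'k freealg) 0" then show ?thesis using e True lv_trans by auto
      next
        assume "\<exists>\<pi>'. pth \<pi>' \<and> int (length \<pi>') = int (length \<rho>) + wdeg (Word w) \<and> lv_eq (W (w @ \<rho>) :: 'k freealg) (W \<pi>')"
        then obtain \<pi>' where "pth \<pi>'" "int (length \<pi>') = int (length \<rho>) + wdeg (Word w)" "lv_eq (W (w @ \<rho>) :: 'k freealg) (W \<pi>')" by blast
        then show ?thesis using e True Lbs \<pi> lv_trans by fastforce
      qed
    qed
  qed
qed

fun paths :: "nat \<Rightarrow> lett list list" where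
  "paths 0 = [[]]"
| "paths (Suc n) = concat (map (\<lambda>\<pi>. [\<pi> @ [La], \<pi> @ [Lb]]) (paths n))"

lemma paths_set: "\<pi> \<in> set (paths n) \<Longrightarrow> pth \<pi> \<and> length \<pi> = n"
  by (induction n arbitrary: \<pi>) auto

lemma sum_list_concat': "sum_list (concat xss) = sum_list (map sum_list xss)"
  by (induction xss) auto

lemma sum_list_concat_map: "sum_list (map F (concat (map G xs))) = sum_list (map (\<lambda>x. sum_list (map F (G x))) xs)"
  by (induction xs) auto

definition WS :: "lett list \<Rightarrow> 'k::ring_1 freealg" where
  "WS u = W (rev (map lstar u))"

definition En :: "nat \<Rightarrow> 'k::ring_1 freealg" where
  "En n = sum_list (map (\<lambda>\<pi>. W \<pi> * WS \<pi>) (paths n))"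

lemma En_one: "lv_eq (En n :: 'k::ring_1 freealg) 1"
proof (induction n)
  case 0 then show ?case by (simp add: En_def WS_def)
next
  case (Suc n)
  have "(En (Suc n) :: 'k freealg) = sum_list (map (\<lambda>\<pi>. W \<pi> * (W [La, Las] + W [Lb, Lbs]) * WS \<pi>) (paths n))"
    unfolding En_def paths.simps sum_list_concat_map
    by (intro arg_cong[where f=sum_list] map_cong refl) (simp add: WS_def W_append[symmetric] algebra_simps)
  also have "lv_eq \<dots> (sum_list (map (\<lambda>\<pi>. W \<pi> * 1 * WS \<pi>) (paths n)))"
    by (intro lv_sum_list lv_multR lv_multL rel5)
  also have "\<dots> = En n" by (simp add: En_def)
  finally show ?case using Suc lv_trans by blast
qed

lemma lstar_lstar[simp]: "lstar (lstar l) = l" by (cases l) auto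

lemma wstar_wstar[simp]: "wstar (wstar w) = w"
proof (cases w)
  case (Word u)
  have "map lstar (map lstar u) = u" by (induction u) auto
  then show ?thesis using Word by (simp add: rev_map[symmetric])
qed

lemma inj_wstar: "inj wstar" by (metis injI wstar_wstar)

lemma wstar_plus: "wstar (u + v) = wstar v + wstar u"
  by (cases u; cases v) simp

lemma wstar_zero[simp]: "wstar 0 = 0" by (simp add: zero_word_def)

lemma ldeg_lstar: "ldeg (lstar l) = - ldeg l" by (cases l) auto

lemma wdeg_wstar: "wdeg (wstar w) = - wdeg w"
proof (cases w)
  case (Word u)
  then show ?thesis by (induction u arbitrary: w) (auto simp: ldeg_lstar)
qed

lemma wdeg_plus: "wdeg (u + v) = wdeg u + wdeg v"
  by (cases u; cases v) simp

context
  fixes \<sigma> :: "'k::field \<Rightarrow> 'k"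
  assumes inv: "field_involution \<sigma>"
begin

lemma s_add: "\<sigma> (x + y) = \<sigma> x + \<sigma> y" using inv unfolding field_involution_def by blast
lemma s_mult: "\<sigma> (x * y) = \<sigma> x * \<sigma> y" using inv unfolding field_involution_def by blast
lemma s_s[simp]: "\<sigma> (\<sigma> x) = x" using inv unfolding field_involution_def by blast
lemma s_0[simp]: "\<sigma> 0 = 0"
proof -
  have "\<sigma> 0 + \<sigma> 0 = \<sigma> 0 + 0" using s_add[of 0 0] by simp
  then show ?thesis by (metis add_left_cancel)
qed
lemma s_1[simp]: "\<sigma> 1 = 1"
proof -
  have a: "\<sigma> 1 = \<sigma> 1 * \<sigma> 1" using s_mult[of 1 1] by simp
  have "\<sigma> 1 \<noteq> 0" using s_s[of 1] by (metis s_0 zero_neq_one)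
  then show ?thesis using a by (metis mult_cancel_left2)
qed
lemma s_inverse: "\<sigma> (inverse x) = inverse (\<sigma> x)"
proof (cases "x = 0")
  case False
  have "\<sigma> x * \<sigma> (inverse x) = 1" using s_mult[of x "inverse x"] False by simp
  then show ?thesis by (metis inverse_unique)
qed simp
lemma s_uminus: "\<sigma> (- x) = - \<sigma> x"
proof -
  have "\<sigma> x + \<sigma> (-x) = 0" using s_add[of x "-x"] by simp
  then show ?thesis by (metis neg_eq_iff_add_eq_0)
qed

lemma lookup_map_s: "Poly_Mapping.lookup (Poly_Mapping.map \<sigma> p) k = \<sigma> (Poly_Mapping.lookup p k)"
  by (simp add: Poly_Mapping.map.rep_eq when_def)

lemma fa_star_single: "fa_star \<sigma> (Poly_Mapping.single w c) = Poly_Mapping.single (wstar w) (\<sigma> c)"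
proof -
  have "Poly_Mapping.map_key wstar (Poly_Mapping.single w c) = Poly_Mapping.single (wstar w) c"
    using map_key_single[OF inj_wstar, of "wstar w" c] by simp
  then show ?thesis unfolding fa_star_def by simp
qed

lemma fa_star_add: "fa_star \<sigma> (x + y) = fa_star \<sigma> x + fa_star \<sigma> y"
  unfolding fa_star_def map_key_plus[OF inj_wstar]
  by (intro poly_mapping_eqI) (simp add: lookup_map_s lookup_add s_add)

lemma fa_star_0[simp]: "fa_star \<sigma> 0 = 0"
  using fa_star_add[of 0 0] by simp

lemma fa_star_uminus: "fa_star \<sigma> (- x) = - fa_star \<sigma> x"
proof -
  have "fa_star \<sigma> x + fa_star \<sigma> (-x) = 0" using fa_star_add[of x "-x"] by simp
  then show ?thesis by (metis neg_eq_iff_add_eq_0)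
qed

lemma fa_star_diff: "fa_star \<sigma> (x - y) = fa_star \<sigma> x - fa_star \<sigma> y"
  using fa_star_add[of x "-y"] fa_star_uminus[of y] by simp

lemma fa_star_mult: "fa_star \<sigma> (x * y) = fa_star \<sigma> y * fa_star \<sigma> x"
proof (induction x rule: pm_induct_add)
  case (single a b)
  show ?case
  proof (induction y rule: pm_induct_add)
    case (single a' b')
    then show ?case by (simp add: mult_single fa_star_single wstar_plus s_mult mult.commute)
  qed (auto simp: algebra_simps fa_star_add)
qed (auto simp: algebra_simps fa_star_add)

lemma fa_star_invol[simp]: "fa_star \<sigma> (fa_star \<sigma> x) = x"
  by (induction x rule: pm_induct_add) (auto simp: fa_star_single fa_star_add)

lemma fa_star_W: "fa_star \<sigma> (W u) = WS u"
  unfolding W_def WS_def fa_star_single by simp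

lemma fa_star_WS: "fa_star \<sigma> (WS u) = W u"
  by (metis fa_star_W fa_star_invol)

lemma fa_star_sc: "fa_star \<sigma> (sc c) = sc (\<sigma> c)"
  unfolding sc_def fa_star_single by simp

lemma fa_star_1[simp]: "fa_star \<sigma> 1 = 1"
  using fa_star_sc[of 1] by simp

lemma fa_star_gen: "fa_star \<sigma> (gen l) = gen (lstar l)"
  unfolding gen_W fa_star_W WS_def by simp

lemma fa_star_ideal: "x \<in> lv_ideal \<Longrightarrow> fa_star \<sigma> x \<in> lv_ideal"
proof -
  let ?J = "{x. fa_star \<sigma> x \<in> lv_ideal}"
  have "two_sided_ideal ?J"
    unfolding two_sided_ideal_def by (auto simp: fa_star_add fa_star_mult lvI_0 lvI_add lvI_lmult lvI_rmult)
  moreover have "leavitt_relations \<subseteq> ?J"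
    using rel_lv unfolding leavitt_relations_def
    by (auto simp: fa_star_add fa_star_mult fa_star_diff fa_star_gen add.commute)
  ultimately have "lv_ideal \<subseteq> ?J" by (rule lv_min)
  then show "x \<in> lv_ideal \<Longrightarrow> fa_star \<sigma> x \<in> lv_ideal" by blast
qed

lemma lv_star: "lv_eq x y \<Longrightarrow> lv_eq (fa_star \<sigma> x) (fa_star \<sigma> y)"
  unfolding lv_eq_def using fa_star_ideal fa_star_diff by metis

end

definition vec :: "nat \<Rightarrow> 'k::ring_1 freealg \<Rightarrow> bool" where
  "vec m v \<longleftrightarrow> (\<forall>w\<in>Poly_Mapping.keys v. \<exists>\<pi>. w = Word \<pi> \<and> pth \<pi> \<and> length \<pi> = m)"

lemma vec_0[simp]: "vec m 0" unfolding vec_def by simp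
lemma vec_sub: "vec m u \<Longrightarrow> Poly_Mapping.keys v \<subseteq> Poly_Mapping.keys u \<union> Poly_Mapping.keys u' \<Longrightarrow> vec m u' \<Longrightarrow> vec m v"
  unfolding vec_def by (meson UnE subsetD)
lemma vec_add: "vec m u \<Longrightarrow> vec m v \<Longrightarrow> vec m (u + v)"
  by (rule vec_sub[OF _ keys_add])
lemma vec_diff: "vec m u \<Longrightarrow> vec m (v :: 'k::ring_1 freealg) \<Longrightarrow> vec m (u - v)"
  by (rule vec_sub[OF _ keys_diff])
lemma vec_scal: "vec m (u::'k::ring_1 freealg) \<Longrightarrow> vec m (u * sc c)"
proof -
  have "Poly_Mapping.keys (u * sc c) \<subseteq> Poly_Mapping.keys u"
    using keys_mult[of u "Poly_Mapping.single 0 c"] unfolding sc_def by (auto split: if_splits)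
  then show "vec m u \<Longrightarrow> vec m (u * sc c)" unfolding vec_def by blast
qed
lemma vec_W: "pth \<pi> \<Longrightarrow> length \<pi> = m \<Longrightarrow> vec m (sc c * W \<pi> :: 'k::ring_1 freealg)"
  unfolding vec_def single_sc_W[symmetric] by auto

lemma WS_Cons: "WS (l # u) = (WS u * W [lstar l] :: 'k::ring_1 freealg)"
  unfolding WS_def by (simp add: W_append)

lemma WS_W: "pth \<pi> \<Longrightarrow> pth \<pi>' \<Longrightarrow> length \<pi> = length \<pi>' \<Longrightarrow>
  lv_eq (WS \<pi> * W \<pi>' :: 'k::ring_1 freealg) (if \<pi> = \<pi>' then 1 else 0)"
proof (induction \<pi> arbitrary: \<pi>')
  case Nil then show ?case by (simp add: WS_def)
next
  case (Cons l \<rho>)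
  obtain l' \<rho>' where p: "\<pi>' = l' # \<rho>'" using Cons.prems by (cases \<pi>') auto
  have l: "l \<in> {La, Lb}" "l' \<in> {La, Lb}" "pth \<rho>" "pth \<rho>'" "length \<rho> = length \<rho>'"
    using Cons.prems p by auto
  have "(WS (l # \<rho>) * W \<pi>' :: 'k freealg) = W (rev (map lstar \<rho>) @ [lstar l, l'] @ \<rho>')"
    unfolding p WS_def by (simp add: W_append[symmetric])
  also have "lv_eq \<dots> (if l = l' then W (rev (map lstar \<rho>) @ \<rho>') else 0)"
    by (rule cancel_mid) (use l in auto)
  also have "\<dots> = (if l = l' then WS \<rho> * W \<rho>' else 0)" by (simp add: WS_def W_append)
  also have "lv_eq \<dots> (if l = l' then (if \<rho> = \<rho>' then 1 else 0) else 0)"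
    using Cons.IH[OF l(3,4,5)] by auto
  also have "\<dots> = (if l # \<rho> = \<pi>' then 1 else 0)" using p by auto
  finally show ?case .
qed

lemma WS_vec: "vec m v \<Longrightarrow> pth \<pi> \<Longrightarrow> length \<pi> = m \<Longrightarrow>
  lv_eq (WS \<pi> * v :: 'k::comm_ring_1 freealg) (sc (Poly_Mapping.lookup v (Word \<pi>)))"
proof (induction v rule: pm_induct)
  case zero then show ?case by simp
next
  case (step a b f)
  have vf: "vec m f" using step.prems(1) step.hyps(3) unfolding vec_def by auto
  obtain \<pi>' where a: "a = Word \<pi>'" "pth \<pi>'" "length \<pi>' = m" using step.prems(1) step.hyps(3) unfolding vec_def by auto
  have "WS \<pi> * (Poly_Mapping.single a b + f) = sc b * (WS \<pi> * W \<pi>') + WS \<pi> * f"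
    unfolding a single_sc_W by (simp add: distrib_left) (metis mult.assoc sc_comm)
  also have "lv_eq \<dots> (sc b * (if \<pi> = \<pi>' then 1 else 0) + sc (Poly_Mapping.lookup f (Word \<pi>)))"
    by (intro lv_add lv_multL WS_W step.IH vf) (use a step.prems in auto)
  also have "\<dots> = sc (Poly_Mapping.lookup (Poly_Mapping.single a b + f) (Word \<pi>))"
    unfolding a by (simp add: lookup_add lookup_single when_def sc_add)
  finally show ?case .
qed

context
  fixes \<sigma> :: "'k::field \<Rightarrow> 'k"
  assumes inv: "field_involution \<sigma>"
begin

definition ip :: "'k freealg \<Rightarrow> 'k freealg \<Rightarrow> 'k" where
  "ip u v = (\<Sum>\<mu>\<in>Poly_Mapping.keys u. \<sigma> (Poly_Mapping.lookup u \<mu>) * Poly_Mapping.lookup v \<mu>)"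

lemma ip_lemma: "vec m u \<Longrightarrow> vec m v \<Longrightarrow> lv_eq (fa_star \<sigma> u * v) (sc (ip u v))"
proof (induction u rule: pm_induct)
  case zero then show ?case by (simp add: fa_star_0[OF inv] ip_def)
next
  case (step a b f)
  have vf: "vec m f" using step.prems(1) step.hyps(3) unfolding vec_def by auto
  obtain \<pi>' where a: "a = Word \<pi>'" "pth \<pi>'" "length \<pi>' = m" using step.prems(1) step.hyps(3) unfolding vec_def by auto
  have "fa_star \<sigma> (Poly_Mapping.single a b + f) * v = sc (\<sigma> b) * (WS \<pi>' * v) + fa_star \<sigma> f * v"
    unfolding fa_star_add[OF inv] fa_star_single[OF inv] a
    by (simp add: single_sc_W WS_def algebra_simps)
  also have "lv_eq \<dots> (sc (\<sigma> b) * sc (Poly_Mapping.lookup v a) + sc (ip f v))"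
  proof (intro lv_add lv_multL step.IH vf)
    show "lv_eq (WS \<pi>' * v) (sc (Poly_Mapping.lookup v a))"
      using WS_vec[OF step.prems(2) a(2) a(3)] a(1) by simp
  qed (use step.prems in auto)
  also have "\<dots> = sc (ip (Poly_Mapping.single a b + f) v)"
  proof -
    have "ip (Poly_Mapping.single a b + f) v = \<sigma> b * Poly_Mapping.lookup v a + ip f v"
      unfolding ip_def step.hyps(3) using step.hyps(1)
      by (subst sum.insert) (auto simp: lookup_add lookup_single when_def in_keys_iff intro!: sum.cong)
    then show ?thesis by (simp add: sc_mult sc_add)
  qed
  finally show ?case .
qed

lemma s_sum: "\<sigma> (sum f S) = sum (\<lambda>x. \<sigma> (f x)) S"
  by (induction S rule: infinite_finite_induct) (auto simp: s_add[OF inv] s_0[OF inv])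

lemma ip_self_s: "\<sigma> (ip v v) = ip v v"
  unfolding ip_def s_sum by (auto simp: s_mult[OF inv] s_s[OF inv] mult.commute)

lemma ip_pos: "positive_definite \<sigma> \<Longrightarrow> ip v v = 0 \<Longrightarrow> v = 0"
proof -
  assume pd: "positive_definite \<sigma>" and z: "ip v v = 0"
  obtain h where h: "bij_betw h {0..<card (Poly_Mapping.keys v)} (Poly_Mapping.keys v)"
    using ex_bij_betw_nat_finite finite_keys by blast
  define k where "k i = Poly_Mapping.lookup v (h i)" for i
  have "(\<Sum>i<card (Poly_Mapping.keys v). k i * \<sigma> (k i)) = ip v v"
    unfolding ip_def k_def lessThan_atLeast0 using sum.reindex_bij_betw[OF h, of "\<lambda>\<mu>. Poly_Mapping.lookup v \<mu> * \<sigma> (Poly_Mapping.lookup v \<mu>)"]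
    by (simp add: mult.commute)
  then have "\<forall>i<card (Poly_Mapping.keys v). k i = 0" using pd z unfolding positive_definite_def by auto
  then have "Poly_Mapping.keys v = {}"
  proof -
    assume a: "\<forall>i<card (Poly_Mapping.keys v). k i = 0"
    { fix \<mu> assume m: "\<mu> \<in> Poly_Mapping.keys v"
      then obtain i where "i < card (Poly_Mapping.keys v)" "\<mu> = h i"
        using h unfolding bij_betw_def by (metis atLeastLessThan_iff imageE)
      then have False using a m unfolding k_def by (simp add: in_keys_iff) }
    then show ?thesis by blast
  qed
  then show "v = 0" by simp
qed

end

definition hom :: "int \<Rightarrow> 'k::ring_1 freealg \<Rightarrow> bool" where
  "hom d x \<longleftrightarrow> (\<forall>w\<in>Poly_Mapping.keys x. wdeg w = d)"

lemma hom_0[simp]: "hom d 0" unfolding hom_def by simp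
lemma hom_add: "hom d x \<Longrightarrow> hom d y \<Longrightarrow> hom d (x + y)"
  unfolding hom_def using keys_add by (meson UnE subsetD)
lemma hom_mult: "hom d x \<Longrightarrow> hom e y \<Longrightarrow> hom (d + e) (x * y)"
proof -
  assume a: "hom d x" "hom e y"
  { fix w assume "w \<in> Poly_Mapping.keys (x * y)"
    then obtain u v where "w = u + v" "u \<in> Poly_Mapping.keys x" "v \<in> Poly_Mapping.keys y"
      using keys_mult by blast
    then have "wdeg w = d + e" using a unfolding hom_def by (simp add: wdeg_plus) }
  then show ?thesis unfolding hom_def by blast
qed
lemma hom_sc: "hom 0 (sc c)" unfolding hom_def sc_def by (simp add: zero_word_def)
lemma hom_vec: "vec m v \<Longrightarrow> hom (int m) v"
proof -
  have "pth \<pi> \<Longrightarrow> wdeg (Word \<pi>) = int (length \<pi>)" for \<pi>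
    by (induction \<pi>) (auto simp: pth_def)
  then show "vec m v \<Longrightarrow> hom (int m) v" unfolding vec_def hom_def by fastforce
qed

lemma hom_star: "field_involution \<sigma> \<Longrightarrow> hom d x \<Longrightarrow> hom (- d) (fa_star \<sigma> x)"
proof -
  assume inv: "field_involution \<sigma>" and h: "hom d x"
  { fix k assume k: "k \<in> Poly_Mapping.keys (fa_star \<sigma> x)"
    have "Poly_Mapping.lookup (fa_star \<sigma> x) k = \<sigma> (Poly_Mapping.lookup x (wstar k))"
      unfolding fa_star_def lookup_map_s[OF inv] using inj_wstar by (simp add: map_key.rep_eq)
    then have "wstar k \<in> Poly_Mapping.keys x" using k s_0[OF inv] by (auto simp: in_keys_iff)
    then have "wdeg k = - d" using h unfolding hom_def by (metis wdeg_wstar minus_minus) }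
  then show ?thesis unfolding hom_def by blast
qed

lemma vecify:
  assumes "\<forall>w\<in>Poly_Mapping.keys y. wdeg w = d \<and> (\<exists>u. w = Word u \<and> stars u \<le> n)"
    and "pth \<nu>" "length \<nu> = n" "int n + d = int m"
  shows "\<exists>v. vec m v \<and> lv_eq (y * W \<nu> :: 'k::comm_ring_1 freealg) v"
  using assms(1)
proof (induction y rule: pm_induct)
  case zero then show ?case by (intro exI[of _ 0]) auto
next
  case (step a b f)
  from step.prems have kf: "\<forall>w\<in>Poly_Mapping.keys f. wdeg w = d \<and> (\<exists>u. w = Word u \<and> stars u \<le> n)"
    using step.hyps(3) by auto
  obtain vf where vf: "vec m vf" "lv_eq (f * W \<nu>) vf" using step.IH[OF kf] by blast
  obtain u where a: "a = Word u" "stars u \<le> n" "wdeg (Word u) = d" using step.prems step.hyps(3) by auto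
  have e: "Poly_Mapping.single a b * W \<nu> = sc b * W (u @ \<nu>)"
    unfolding a single_sc_W by (simp add: W_append mult.assoc)
  have disj: "lv_eq (W (u @ \<nu>) :: 'k freealg) 0 \<or>
   (\<exists>\<pi>'. pth \<pi>' \<and> int (length \<pi>') = int (length \<nu>) + wdeg (Word u) \<and> lv_eq (W (u @ \<nu>) :: 'k freealg) (W \<pi>'))"
    using reduce[OF assms(2), of u, where 'k='k] a(2) assms(3) by blast
  have "\<exists>va. vec m va \<and> lv_eq (Poly_Mapping.single a b * W \<nu>) va"
    using disj
  proof
    assume "lv_eq (W (u @ \<nu>) :: 'k freealg) 0"
    then show ?thesis unfolding e by (intro exI[of _ 0]) (auto dest: lv_multL[where x="sc b"])
  next
    assume "\<exists>\<pi>'. pth \<pi>' \<and> int (length \<pi>') = int (length \<nu>) + wdeg (Word u) \<and> lv_eq (W (u @ \<nu>) :: 'k freealg) (W \<pi>')"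
    then obtain \<pi>' where p: "pth \<pi>'" "int (length \<pi>') = int (length \<nu>) + wdeg (Word u)" "lv_eq (W (u @ \<nu>) :: 'k freealg) (W \<pi>')" by blast
    have "length \<pi>' = m" using p(2) a(3) assms(3,4) by simp
    then show ?thesis unfolding e using p by (intro exI[of _ "sc b * W \<pi>'"]) (auto intro: vec_W lv_multL)
  qed
  then obtain va where va: "vec m va" "lv_eq (Poly_Mapping.single a b * W \<nu>) va" by blast
  show ?case using va vf by (intro exI[of _ "va + vf"]) (auto simp: distrib_right intro: vec_add lv_add)
qed

context
  fixes \<sigma> :: "'k::field \<Rightarrow> 'k"
  assumes inv: "field_involution \<sigma>" and pd: "positive_definite \<sigma>"
begin

abbreviation st where "st x \<equiv> fa_star \<sigma> x"

lemma GS_step: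
  fixes P x z t v0 :: "'k freealg"
  assumes hP: "hom 0 P" and sP: "lv_eq (st P) P" and PP: "lv_eq (P*P) P"
    and Pvec: "\<forall>v. vec m v \<longrightarrow> (\<exists>v'. vec m v' \<and> lv_eq (P*v) v')"
    and Pfix: "\<forall>z'\<in>set zs. lv_eq (P*(x*z')) (x*z')"
    and Pt: "lv_eq P (x*t)"
    and v0: "vec m v0" "lv_eq (x*z) v0"
  shows "\<exists>P'. hom 0 P' \<and> lv_eq (st P') P' \<and> lv_eq (P'*P') P' \<and>
     (\<forall>v. vec m v \<longrightarrow> (\<exists>v'. vec m v' \<and> lv_eq (P'*v) v')) \<and>
     (\<forall>z'\<in>set (z#zs). lv_eq (P'*(x*z')) (x*z')) \<and> (\<exists>t. lv_eq P' (x*t))"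
proof -
  obtain v' where v': "vec m v'" "lv_eq (P*v0) v'" using Pvec v0(1) by blast
  define w where "w = v0 - v'"
  have vw: "vec m w" unfolding w_def using v0(1) v'(1) by (rule vec_diff)
  have Pv': "lv_eq (P*v') v'"
  proof -
    have "lv_eq (P*v') (P*(P*v0))" by (rule lv_multL, rule lv_sym, rule v'(2))
    also have "P*(P*v0) = (P*P)*v0" by (simp add: mult.assoc)
    also have "lv_eq \<dots> (P*v0)" by (rule lv_multR, rule PP)
    also have "lv_eq \<dots> v'" by (rule v'(2))
    finally show ?thesis .
  qed
  have Pw: "lv_eq (P*w) 0"
  proof -
    have "P*w = P*v0 - P*v'" unfolding w_def by (simp add: algebra_simps)
    also have "lv_eq \<dots> (v' - v')" by (intro lv_diff v'(2) Pv')
    finally show ?thesis by simp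
  qed
  have wP: "lv_eq (st w * P) 0"
  proof -
    have "lv_eq (st w * P) (st w * st P)" by (rule lv_multL, rule lv_sym, rule sP)
    also have "st w * st P = st (P * w)" by (simp add: fa_star_mult[OF inv])
    also have "lv_eq \<dots> (st 0)" by (rule lv_star[OF inv Pw])
    finally show ?thesis by (simp add: fa_star_0[OF inv])
  qed
  have wv': "lv_eq (st w * v') 0"
  proof -
    have "lv_eq (st w * v') (st w * (P * v0))" by (rule lv_multL, rule lv_sym, rule v'(2))
    also have "st w * (P * v0) = (st w * P) * v0" by (simp add: mult.assoc)
    also have "lv_eq \<dots> (0 * v0)" by (rule lv_multR, rule wP)
    finally show ?thesis by simp
  qed
  have wxz: "lv_eq w (x * (z - t * x * z))"
  proof -
    have "lv_eq v' (P * v0)" by (rule lv_sym, rule v'(2))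
    also have "lv_eq \<dots> (P * (x * z))" by (rule lv_multL, rule lv_sym, rule v0(2))
    also have "lv_eq \<dots> ((x * t) * (x * z))" by (rule lv_multR, rule Pt)
    finally have a: "lv_eq v' ((x * t) * (x * z))" .
    have "lv_eq w (x * z - (x * t) * (x * z))" unfolding w_def
      by (intro lv_diff a lv_sym[OF v0(2)])
    then show ?thesis by (simp add: algebra_simps)
  qed
  show ?thesis
  proof (cases "ip \<sigma> w w = 0")
    case True
    then have "w = 0" using ip_pos[OF inv pd] by blast
    then have v0v': "v0 = v'" unfolding w_def by simp
    show ?thesis
    proof (rule exI[of _ P], intro conjI hP sP PP Pvec)
      show "\<forall>z'\<in>set (z # zs). lv_eq (P * (x * z')) (x * z')"
      proof
        fix z' assume "z' \<in> set (z # zs)"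
        then consider "z' = z" | "z' \<in> set zs" by auto
        then show "lv_eq (P * (x * z')) (x * z')"
        proof cases
          case 1
          have "lv_eq (P * (x * z)) (P * v0)" by (rule lv_multL, rule v0(2))
          also have "lv_eq \<dots> v'" by (rule v'(2))
          also have "lv_eq v' (x * z)" unfolding v0v'[symmetric] by (rule lv_sym, rule v0(2))
          finally show ?thesis using 1 by simp
        qed (use Pfix in auto)
      qed
    qed (use Pt in auto)
  next
    case False
    define s where "s = ip \<sigma> w w"
    define c where "c = inverse s"
    have s0: "s \<noteq> 0" using False s_def by simp
    have cs: "c * s = 1" unfolding c_def using s0 by simp
    have sc_s: "\<sigma> c = c" unfolding c_def s_def s_inverse[OF inv] ip_self_s[OF inv] ..
    have ww: "lv_eq (st w * w) (sc s)" unfolding s_def by (rule ip_lemma[OF inv vw vw])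
    define Q where "Q = w * sc c * st w"
    define P' where "P' = P + Q"
    have hQ: "hom 0 Q"
    proof -
      have "hom (int m + 0 + - int m) Q" unfolding Q_def
        by (intro hom_mult hom_star[OF inv] hom_vec vw hom_sc)
      then show ?thesis by simp
    qed
    have sQ: "st Q = Q"
      unfolding Q_def by (simp add: fa_star_mult[OF inv] fa_star_sc[OF inv] fa_star_invol[OF inv] sc_s mult.assoc)
    have PQ: "lv_eq (P*Q) 0"
    proof -
      have "P*Q = (P*w) * (sc c * st w)" unfolding Q_def by (simp add: mult.assoc)
      also have "lv_eq \<dots> (0 * (sc c * st w))" by (rule lv_multR, rule Pw)
      finally show ?thesis by simp
    qed
    have QP: "lv_eq (Q*P) 0"
    proof -
      have "Q*P = (w * sc c) * (st w * P)" unfolding Q_def by (simp add: mult.assoc)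
      also have "lv_eq \<dots> ((w * sc c) * 0)" by (rule lv_multL, rule wP)
      finally show ?thesis by simp
    qed
    have QQ: "lv_eq (Q*Q) Q"
    proof -
      have "Q*Q = (w * sc c) * (st w * w) * (sc c * st w)" unfolding Q_def by (simp add: mult.assoc)
      also have "lv_eq \<dots> ((w * sc c) * sc s * (sc c * st w))" by (rule lv_multR, rule lv_multL, rule ww)
      also have "\<dots> = w * sc (c * s * c) * st w" by (simp add: sc_mult mult.assoc)
      also have "\<dots> = Q" unfolding Q_def using cs by simp
      finally show ?thesis .
    qed
    have Qv: "lv_eq (Q * v) (w * sc (c * ip \<sigma> w v))" if "vec m v" for v
    proof -
      have "Q * v = (w * sc c) * (st w * v)" unfolding Q_def by (simp add: mult.assoc)
      also have "lv_eq \<dots> ((w * sc c) * sc (ip \<sigma> w v))" by (rule lv_multL, rule ip_lemma[OF inv vw that])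
      also have "\<dots> = w * sc (c * ip \<sigma> w v)" by (simp add: sc_mult mult.assoc)
      finally show ?thesis .
    qed
    show ?thesis
    proof (rule exI[of _ P'], intro conjI)
      show "hom 0 P'" unfolding P'_def by (rule hom_add[OF hP hQ])
      show "lv_eq (st P') P'" unfolding P'_def fa_star_add[OF inv] sQ by (rule lv_add[OF sP lv_refl])
      have "P' * P' = P*P + (P*Q + (Q*P + Q*Q))" unfolding P'_def by (simp add: algebra_simps)
      also have "lv_eq \<dots> (P + (0 + (0 + Q)))" by (intro lv_add PP PQ QP QQ)
      finally show "lv_eq (P' * P') P'" unfolding P'_def by simp
      show "\<forall>v. vec m v \<longrightarrow> (\<exists>v'. vec m v' \<and> lv_eq (P' * v) v')"
      proof (intro allI impI)
        fix v :: "'k freealg" assume vv: "vec m v"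
        obtain v1 where v1: "vec m v1" "lv_eq (P*v) v1" using Pvec vv by blast
        have "P' * v = P*v + Q*v" unfolding P'_def by (simp add: algebra_simps)
        also have "lv_eq \<dots> (v1 + w * sc (c * ip \<sigma> w v))" by (intro lv_add v1(2) Qv vv)
        finally show "\<exists>v'. vec m v' \<and> lv_eq (P' * v) v'"
          using v1(1) vec_scal[OF vw] by (blast intro: vec_add)
      qed
      show "\<forall>z'\<in>set (z # zs). lv_eq (P' * (x * z')) (x * z')"
      proof
        fix z' assume "z' \<in> set (z # zs)"
        then consider "z' = z" | "z' \<in> set zs" by auto
        then show "lv_eq (P' * (x * z')) (x * z')"
        proof cases
          case 1
          have wv0: "lv_eq (st w * v0) (sc s)"
          proof -
            have "st w * v0 = st w * v' + st w * w" unfolding w_def by (simp add: algebra_simps)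
            also have "lv_eq \<dots> (0 + sc s)" by (intro lv_add wv' ww)
            finally show ?thesis by simp
          qed
          have "lv_eq (P' * (x * z)) (P' * v0)" by (rule lv_multL, rule v0(2))
          also have "P' * v0 = P * v0 + (w * sc c) * (st w * v0)" unfolding P'_def Q_def by (simp add: algebra_simps)
          also have "lv_eq \<dots> (v' + (w * sc c) * sc s)" by (intro lv_add v'(2) lv_multL wv0)
          also have "\<dots> = v0" using cs unfolding w_def by (simp add: sc_mult[symmetric] mult.assoc)
          also have "lv_eq v0 (x * z)" by (rule lv_sym, rule v0(2))
          finally show ?thesis using 1 by simp
        next
          case 2
          then have fx: "lv_eq (x * z') (P * (x * z'))" using Pfix lv_sym by blast
          have "lv_eq (st w * (x * z')) (st w * (P * (x * z')))" by (rule lv_multL, rule fx)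
          also have "\<dots> = (st w * P) * (x * z')" by (simp add: mult.assoc)
          also have "lv_eq \<dots> (0 * (x * z'))" by (rule lv_multR, rule wP)
          finally have a: "lv_eq (st w * (x * z')) 0" by simp
          have "P' * (x * z') = P * (x * z') + (w * sc c) * (st w * (x * z'))"
            unfolding P'_def Q_def by (simp add: algebra_simps)
          also have "lv_eq \<dots> (x * z' + (w * sc c) * 0)" by (intro lv_add lv_multL a lv_sym[OF fx])
          finally show ?thesis by simp
        qed
      qed
      have "P' = P + w * (sc c * st w)" unfolding P'_def Q_def by (simp add: mult.assoc)
      also have "lv_eq \<dots> (x * t + (x * (z - t * x * z)) * (sc c * st w))" by (intro lv_add Pt lv_multR wxz)
      also have "\<dots> = x * (t + (z - t * x * z) * (sc c * st w))" by (simp add: algebra_simps)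
      finally show "\<exists>t. lv_eq P' (x * t)" by blast
    qed
  qed
qed

lemma GS:
  fixes x :: "'k freealg"
  assumes "\<forall>z\<in>set zs. \<exists>v. vec m v \<and> lv_eq (x * z) v"
  shows "\<exists>P. hom 0 P \<and> lv_eq (st P) P \<and> lv_eq (P*P) P \<and>
     (\<forall>v. vec m v \<longrightarrow> (\<exists>v'. vec m v' \<and> lv_eq (P*v) v')) \<and>
     (\<forall>z'\<in>set zs. lv_eq (P*(x*z')) (x*z')) \<and> (\<exists>t. lv_eq P (x*t))"
  using assms
proof (induction zs)
  case Nil
  show ?case by (intro exI[of _ 0] conjI) (auto simp: fa_star_0[OF inv] intro!: exI[of _ 0])
next
  case (Cons z zs)
  then obtain P t where P: "hom 0 P" "lv_eq (st P) P" "lv_eq (P*P) P"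
     "\<forall>v. vec m v \<longrightarrow> (\<exists>v'. vec m v' \<and> lv_eq (P*v) v')"
     "\<forall>z'\<in>set zs. lv_eq (P*(x*z')) (x*z')" "lv_eq P (x*t)" by auto
  obtain v0 where "vec m v0" "lv_eq (x*z) v0" using Cons.prems by auto
  from GS_step[OF P this] show ?case .
qed

end

fun opl :: "lett \<Rightarrow> ((nat \<Rightarrow> bool) \<Rightarrow> 'k::comm_ring_1) \<Rightarrow> (nat \<Rightarrow> bool) \<Rightarrow> 'k" where
  "opl La f s = (if s 0 then f (\<lambda>i. s (Suc i)) else 0)"
| "opl Lb f s = (if s 0 then 0 else f (\<lambda>i. s (Suc i)))"
| "opl Las f s = f (case_nat True s)"
| "opl Lbs f s = f (case_nat False s)"

fun opw :: "word \<Rightarrow> ((nat \<Rightarrow> bool) \<Rightarrow> 'k::comm_ring_1) \<Rightarrow> (nat \<Rightarrow> bool) \<Rightarrow> 'k" where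
  "opw (Word u) = List.foldr (\<lambda>l g. opl l \<circ> g) u id"

lemma opl_lin: "opl l (\<lambda>s. c * f s + d * g s) s = c * opl l f s + d * opl l g s"
  by (cases l) auto

lemma opw_lin: "opw w (\<lambda>s. c * f s + d * g s) s = c * opw w f s + d * opw w g s"
proof (cases w)
  case (Word u)
  then show ?thesis
  proof (induction u arbitrary: w s)
    case Nil then show ?case by simp
  next
    case (Cons l u)
    have "opw (Word (l # u)) (\<lambda>s. c * f s + d * g s) s = opl l (opw (Word u) (\<lambda>s. c * f s + d * g s)) s" by simp
    also have "opw (Word u) (\<lambda>s. c * f s + d * g s) = (\<lambda>s. c * opw (Word u) f s + d * opw (Word u) g s)"
      using Cons.IH by auto
    also have "opl l \<dots> s = c * opl l (opw (Word u) f) s + d * opl l (opw (Word u) g) s" by (rule opl_lin)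
    finally show ?case using Cons.prems by simp
  qed
qed

lemma opw_scale: "opw w (\<lambda>s. c * f s) s = c * opw w f s"
  using opw_lin[of w c f 0 f s] by simp
lemma opw_add: "opw w (\<lambda>s. f s + g s) s = opw w f s + opw w g s"
  using opw_lin[of w 1 f 1 g s] by simp
lemma opw_zero: "opw w (\<lambda>s. 0) s = 0"
  using opw_scale[of w 0 "\<lambda>s. 0" s] by simp

lemma foldr_opl: "List.foldr (\<lambda>l g. opl l \<circ> g) x g0 = List.foldr (\<lambda>l g. opl l \<circ> g) x id \<circ> g0"
  by (induction x) auto

lemma opw_plus: "opw (u + v) f = opw u (opw v f)"
  by (cases u; cases v) (simp add: foldr_append foldr_opl[of _ "List.foldr _ _ id"])

definition phi :: "'k::comm_ring_1 freealg \<Rightarrow> ((nat \<Rightarrow> bool) \<Rightarrow> 'k) \<Rightarrow> (nat \<Rightarrow> bool) \<Rightarrow> 'k" where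
  "phi x f s = (\<Sum>w\<in>Poly_Mapping.keys x. Poly_Mapping.lookup x w * opw w f s)"

lemma phi_S: "finite S \<Longrightarrow> Poly_Mapping.keys x \<subseteq> S \<Longrightarrow>
  phi x f s = (\<Sum>w\<in>S. Poly_Mapping.lookup x w * opw w f s)"
  unfolding phi_def by (rule sum.mono_neutral_left) (auto simp: in_keys_iff)

lemma phi_add: "phi (x + y) f s = phi x f s + phi y f s"
proof -
  let ?S = "Poly_Mapping.keys x \<union> Poly_Mapping.keys y"
  have "phi (x + y) f s = (\<Sum>w\<in>?S. Poly_Mapping.lookup (x + y) w * opw w f s)"
    by (rule phi_S) (use keys_add[of x y] in auto)
  also have "\<dots> = (\<Sum>w\<in>?S. Poly_Mapping.lookup x w * opw w f s) + (\<Sum>w\<in>?S. Poly_Mapping.lookup y w * opw w f s)"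
    by (simp add: lookup_add distrib_right sum.distrib)
  also have "\<dots> = phi x f s + phi y f s"
  proof -
    have "phi x f s = (\<Sum>w\<in>?S. Poly_Mapping.lookup x w * opw w f s)" by (rule phi_S) auto
    moreover have "phi y f s = (\<Sum>w\<in>?S. Poly_Mapping.lookup y w * opw w f s)" by (rule phi_S) auto
    ultimately show ?thesis by simp
  qed
  finally show ?thesis .
qed

lemma phi_0[simp]: "phi 0 f s = 0" unfolding phi_def by simp

lemma phi_single: "phi (Poly_Mapping.single w c) f s = c * opw w f s"
  unfolding phi_def by auto

lemma phi_zero: "phi x (\<lambda>s. 0) s = 0"
  unfolding phi_def by (simp add: opw_zero)

lemma phi_lin: "phi x (\<lambda>s. c * f s + d * g s) s = c * phi x f s + d * phi x g s"
  unfolding phi_def by (simp add: opw_lin sum.distrib sum_distrib_left algebra_simps)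

lemma phi_mult: "phi (x * y) f s = phi x (phi y f) s"
proof (induction x arbitrary: s rule: pm_induct_add)
  case zero then show ?case by simp
next
  case (single a b)
  show ?case
  proof (induction y arbitrary: s rule: pm_induct_add)
    case zero
    have "phi 0 f = (\<lambda>s. 0)" by (rule ext) simp
    then show ?case by (simp add: phi_single opw_zero)
  next
    case (single a' b')
    have "phi (Poly_Mapping.single a' b') f = (\<lambda>s. b' * opw a' f s)"
      by (rule ext) (simp add: phi_single)
    then show ?case by (simp add: mult_single phi_single opw_plus opw_scale)
  next
    case (add y1 y2)
    have "phi (y1 + y2) f = (\<lambda>s. 1 * phi y1 f s + 1 * phi y2 f s)"
      by (rule ext) (simp add: phi_add)
    then show ?case using add opw_add[of a "phi y1 f" "phi y2 f" s] by (simp add: distrib_left phi_add phi_single)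
  qed
next
  case (add x1 x2)
  then show ?case by (simp add: distrib_right phi_add)
qed

lemma phi_minus: "phi (x - y) f s = phi x f s - phi y f s"
  using phi_add[of "x - y" y f s] by (simp add: algebra_simps)

lemma phi_W: "phi (W u) f s = opw (Word u) f s"
  unfolding W_def by (simp add: phi_single)

lemma phi_1: "phi 1 f s = f s"
  using phi_W[of "[]" f s] by simp

lemma phi_kill: "\<forall>f s. phi x f s = 0 \<Longrightarrow> phi r (phi x f) s = 0"
proof -
  assume "\<forall>f s. phi x f s = 0"
  then have "phi x f = (\<lambda>s. 0)" by auto
  then show ?thesis by (simp add: phi_zero)
qed

lemma case_nat_s: "s 0 \<Longrightarrow> case_nat True (\<lambda>i. s (Suc i)) = s"
  "\<not> s 0 \<Longrightarrow> case_nat False (\<lambda>i. s (Suc i)) = s"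
  by (rule ext, simp split: nat.split)+

lemma not_aas: "\<not> lv_eq (gen La * gen Las) (1 :: 'k::field freealg)"
proof
  assume a: "lv_eq (gen La * gen Las) (1 :: 'k freealg)"
  let ?J = "{x :: 'k freealg. \<forall>f s. phi x f s = 0}"
  have "two_sided_ideal ?J"
    unfolding two_sided_ideal_def by (auto simp: phi_add phi_mult phi_zero phi_kill)
  moreover have "leavitt_relations \<subseteq> ?J"
  proof -
    have "\<And>f s. phi (gen La * gen Las + gen Lb * gen Lbs - (1::'k freealg)) f s = 0"
      by (simp add: phi_minus phi_add phi_1 phi_mult gen_W phi_W case_nat_s)
    moreover have "\<And>f s. phi (gen Las * gen La - (1::'k freealg)) f s = 0"
      by (simp add: phi_minus phi_add phi_1 phi_mult gen_W phi_W case_nat_s)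
    moreover have "\<And>f s. phi (gen Lbs * gen Lb - (1::'k freealg)) f s = 0"
      by (simp add: phi_minus phi_add phi_1 phi_mult gen_W phi_W case_nat_s)
    ultimately show ?thesis unfolding leavitt_relations_def
      by (auto simp: phi_mult gen_W phi_W)
  qed
  ultimately have "lv_ideal \<subseteq> ?J" by (rule lv_min)
  then have "gen La * gen Las - 1 \<in> ?J" using a unfolding lv_eq_def by blast
  then have "phi (gen La * gen Las - (1::'k freealg)) (\<lambda>_. 1) (\<lambda>_. False) = 0" by blast
  then show False by (simp add: phi_minus phi_1 phi_mult gen_W phi_W)
qed

lemma mult_sum_list: "y * sum_list (map f xs) = sum_list (map (\<lambda>z. y * f z) xs)"
  for y :: "'a::semiring_0"
  by (induction xs) (auto simp: distrib_left)

lemma star_regular: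
  fixes \<sigma> :: "'k::field \<Rightarrow> 'k"
  assumes inv: "field_involution \<sigma>" and pd: "positive_definite \<sigma>"
  shows "lv_graded_star_regular \<sigma>"
  unfolding lv_graded_star_regular_def
proof (intro allI impI)
  fix x :: "'k freealg" assume "lv_homog x"
  then obtain y d where xy: "lv_eq x y" and yd: "\<forall>w\<in>Poly_Mapping.keys y. wdeg w = d"
    unfolding lv_homog_def by blast
  define sw where "sw w = (case w of Word u \<Rightarrow> stars u)" for w
  define n where "n = nat \<bar>d\<bar> + sum sw (Poly_Mapping.keys y)"
  define m where "m = nat (int n + d)"
  have nd: "\<bar>d\<bar> \<le> int n" unfolding n_def by (simp add: sum_nonneg)
  have nm: "int n + d = int m" unfolding m_def using nd by simp
  have ky: "\<forall>w\<in>Poly_Mapping.keys y. wdeg w = d \<and> (\<exists>u. w = Word u \<and> stars u \<le> n)"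
  proof
    fix w assume w: "w \<in> Poly_Mapping.keys y"
    obtain u where u: "w = Word u" by (cases w)
    have "sw w \<le> sum sw (Poly_Mapping.keys y)" by (rule member_le_sum) (use w in auto)
    then have "stars u \<le> n" unfolding n_def sw_def u by simp
    then show "wdeg w = d \<and> (\<exists>u. w = Word u \<and> stars u \<le> n)" using yd w u by blast
  qed
  have zs: "\<forall>z\<in>set (map W (paths n)). \<exists>v. vec m v \<and> lv_eq (y * z) v"
    using vecify[OF ky _ _ nm] paths_set by auto
  obtain P t where P: "hom 0 P" "lv_eq (fa_star \<sigma> P) P" "lv_eq (P*P) P"
     "\<forall>z'\<in>set (map W (paths n)). lv_eq (P*(y*z')) (y*z')" "lv_eq P (y*t)"
    using GS[OF inv pd zs] by blast
  have Py: "lv_eq (P * y) y"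
  proof -
    have yE: "lv_eq (y * En n) y" using lv_multL[OF En_one, of y n] by simp
    have "lv_eq (P * y) (P * (y * En n))" by (rule lv_multL, rule lv_sym, rule yE)
    also have "P * (y * En n) = sum_list (map (\<lambda>\<pi>. (P * (y * W \<pi>)) * WS \<pi>) (paths n))"
      unfolding En_def by (simp add: mult_sum_list mult.assoc)
    also have "lv_eq \<dots> (sum_list (map (\<lambda>\<pi>. (y * W \<pi>) * WS \<pi>) (paths n)))"
      by (rule lv_sum_list, rule lv_multR) (use P(4) in auto)
    also have "\<dots> = y * En n"
      unfolding En_def by (simp add: mult_sum_list mult.assoc)
    also have "lv_eq \<dots> y" by (rule yE)
    finally show ?thesis .
  qed
  show "\<exists>p. lv_homog p \<and> lv_eq (p * p) p \<and> lv_eq (fa_star \<sigma> p) p \<and>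
            (\<exists>y. lv_eq x (p * y)) \<and> (\<exists>z. lv_eq p (x * z))"
  proof (rule exI[of _ P], intro conjI)
    show "lv_homog P" unfolding lv_homog_def using P(1) lv_refl unfolding hom_def by blast
    show "lv_eq (P * P) P" by (rule P(3))
    show "lv_eq (fa_star \<sigma> P) P" by (rule P(2))
    have "lv_eq x (P * y)" using xy lv_sym[OF Py] by (rule lv_trans)
    then show "\<exists>y. lv_eq x (P * y)" by blast
    have "lv_eq P (x * t)" using P(5) lv_multR[OF lv_sym[OF xy], of t] by (rule lv_trans)
    then show "\<exists>z. lv_eq P (x * z)" by blast
  qed
qed

lemma homog_gen: "lv_homog (gen l :: 'k::field freealg)"
  unfolding lv_homog_def gen_def by (intro exI[of _ "gen l"] exI[of _ "ldeg l"]) (auto simp: gen_def)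

lemma aa_rel: "lv_eq (gen Las * gen La) (1 :: 'k::ring_1 freealg)"
  using rel1 by (simp add: gen_W W_append[symmetric])

lemma not_DF: "\<not> lv_graded_directly_finite TYPE('k::field)"
  unfolding lv_graded_directly_finite_def
  using homog_gen[of Las, where 'k='k] homog_gen[of La, where 'k='k] aa_rel not_aas by blast

lemma not_UR: "\<not> lv_graded_unit_regular TYPE('k::field)"
proof
  assume "lv_graded_unit_regular TYPE('k)"
  then obtain u :: "'k freealg" where u: "lv_unit u" "lv_eq (gen Las * u * gen Las) (gen Las)"
    unfolding lv_graded_unit_regular_def using homog_gen[of Las, where 'k='k] by blast
  obtain v where v: "lv_eq (u * v) 1" "lv_eq (v * u) 1" using u(1) unfolding lv_unit_def by blast
  let ?x = "gen Las :: 'k freealg" and ?a = "gen La :: 'k freealg"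
  have xa: "lv_eq (?x * ?a) 1" by (rule aa_rel)
  have xu: "lv_eq (?x * u) 1"
  proof -
    have "lv_eq (?x * u) (?x * u * (?x * ?a))" using lv_multL[OF xa, of "?x * u"] by (simp add: lv_sym)
    also have "\<dots> = (?x * u * ?x) * ?a" by (simp add: mult.assoc)
    also have "lv_eq \<dots> (?x * ?a)" by (rule lv_multR, rule u(2))
    finally show ?thesis using xa by (rule lv_trans)
  qed
  have xv: "lv_eq ?x v"
  proof -
    have "lv_eq ?x (?x * (u * v))" using lv_multL[OF v(1), of ?x] by (simp add: lv_sym)
    also have "\<dots> = (?x * u) * v" by (simp add: mult.assoc)
    also have "lv_eq \<dots> (1 * v)" by (rule lv_multR, rule xu)
    finally show ?thesis by simp
  qed
  have ux: "lv_eq (u * ?x) 1" using lv_multL[OF xv, of u] v(1) by (rule lv_trans)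
  have au: "lv_eq ?a u"
  proof -
    have "lv_eq ?a ((u * ?x) * ?a)" using lv_multR[OF ux, of ?a] by (simp add: lv_sym)
    also have "\<dots> = u * (?x * ?a)" by (simp add: mult.assoc)
    also have "lv_eq \<dots> (u * 1)" by (rule lv_multL, rule xa)
    finally show ?thesis by simp
  qed
  have "lv_eq (?a * ?x) 1" using lv_multR[OF au, of ?x] ux by (rule lv_trans)
  then show False using not_aas by blast
qed

theorem mainTheorem16:
  fixes \<sigma> :: "'k::field \<Rightarrow> 'k"
  assumes "field_involution \<sigma>" and "positive_definite \<sigma>"
  shows "lv_graded_star_regular \<sigma> \<and> \<not> lv_graded_unit_regular TYPE('k)
         \<and> \<not> lv_graded_directly_finite TYPE('k)"
  using star_regular[OF assms] not_UR not_DF by blast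

end
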